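(* In an execution of Algorithm A1 (described in the context) with $n>3t$ and a weak common coin, if at the start of some round $r$ all non-faulty processes have the same estimate $\mathit{est}=v\in\{0,1\}$, then every non-faulty process decides $v$ in round $r$ (if it has not already decided), and no non-faulty process ever decides a value different from $v$ in any later round.
   Context: System model: $n$ asynchronous sequential processes $p_1,\dots,p_n$, of which at most $t$ are Byzantine (behave arbitrarily, may collude); the others are non-faulty. Processes communicate over reliable asynchronous point-to-point channels between every pair: messages between non-faulty processes are eventually delivered, unaltered, not duplicated, and the receiver knows the identity of the sender; there is no bound on delays and the adversary controls delivery order. "Broadcast $m$" means sending $m$ to every process (including oneself). When counting messages "received from $k$ distinct processes", at most one message per sender is counted. BV-Broadcast with tag $T$ and input $v$ at process $p_i$: set $\mathit{bin}_i\leftarrow\emptyset$; broadcast $\mathrm{BVAL}(T,v)$; return (a reference to) $\mathit{bin}_i$, which may keep growing afterwards. In the background, for every value $x$: when $\mathrm{BVAL}(T,x)$ has been received from $t+1$ distinct processes and $p_i$ has not yet broadcast $\mathrm{BVAL}(T,x)$, $p_i$ broadcasts $\mathrm{BVAL}(T,x)$; when $\mathrm{BVAL}(T,x)$ has been received from $2t+1$ distinct processes, $p_i$ adds $x$ to $\mathit{bin}_i$. SBV-Broadcast with tag $T$ and input $v$ at $p_i$: $\mathit{bin}_i\leftarrow$ BV-Broadcast with tag $T$ and input $v$; wait until $\mathit{bin}_i\neq\emptyset$; broadcast $\mathrm{AUX}(T,w)$ for some $w\in\mathit{bin}_i$; wait until there are $n-t$ distinct processes $p_j$ from which a message $\mathrm{AUX}(T,w_j)$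 has been received with $w_j\in \mathit{bin}_i$ (the current value of the growing set); let $\mathit{view}_i$ be the set of these values $w_j$; return $(\mathit{view}_i,\mathit{bin}_i)$ ($\mathit{view}_i$ is fixed upon return, $\mathit{bin}_i$ may still grow). Weak common coin with parameter $d\ge 2$: for each round $r$, a call $\mathsf{random}()$ in round $r$ returns a bit to each non-faulty caller; with probability $1/d$ all non-faulty processes get $0$, with probability $1/d$ all get $1$, and with probability $(d-2)/d$ they may get different values. The round-$r$ output is random and unpredictable, and is not revealed to anyone before at least one non-faulty process has called $\mathsf{random}()$ in round $r$. Algorithm A1 (binary consensus), at non-faulty $p_i$ proposing $v_i\in\{0,1\}$: set $\mathit{est}\leftarrow v_i$, $r\leftarrow 0$. Repeat forever: (1) $r\leftarrow r+1$. (2) $(\mathit{view}_0,\mathit{bin})\leftarrow$ SBV-Broadcast with tag $(r,0)$ and input $\mathit{est}$. (3) Broadcast $\mathrm{AUXSET}(r,\mathit{view}_0)$. (4) Wait until there are $n-t$ distinct processes $p_j$ from which a message $\mathrm{AUXSET}(r,S_j)$ has been received with $S_j\subseteq\mathit{bin}$ (current value), and let $\mathit{view}_1=\bigcup_j S_j$. (5) If $\mathit{view}_1=\{w\}$ then $\mathit{est}\leftarrow w$, else $\mathit{est}\leftarrow\bot$. (6) $(\mathit{view}_2,\_)\leftarrow$ SBV-Broadcast with tag $(r,1)$ and input $\mathit{est}\in\{0,1,\bot\}$. (7) $s\leftarrow\mathsf{random}()$. (8) If $\mathit{view}_2=\{v\}$ with $v\neq\bot$: $\mathit{est}\leftarrow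 v$ and decide $v$ if not yet decided; if $\mathit{view}_2=\{v,\bot\}$ with $v\in\{0,1\}$: $\mathit{est}\leftarrow v$; if $\mathit{view}_2=\{\bot\}$: $\mathit{est}\leftarrow s$. *)

theory Defs
  imports Main
begin

text \<open>Processes are the naturals below n. Values are of type bool option:
  Some False = 0, Some True = 1, None = bot. A tag is a pair (r, k) with k in {0,1}.\<close>

datatype msg =
    BVAL "nat \<times> nat" "bool option"
  | AUX "nat \<times> nat" "bool option"
  | AUXSET nat "bool option set"

text \<open>Program locations of a non-faulty process (waiting points of A1).
  Start: about to execute step (1) of the next round.
  WBin0: inside SBV-Broadcast of tag (r,0), waiting for bin nonempty.
  WAux0: waiting for n-t AUX messages of tag (r,0).
  WAuxSet: step (4), waiting for n-t AUXSET messages.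
  WBin1 / WAux1: the same two waits inside SBV-Broadcast of tag (r,1).\<close>

datatype pcv = Start | WBin0 | WAux0 | WAuxSet | WBin1 | WAux1

record lstate =
  rnd :: nat
  pc :: pcv
  est :: "bool option"
  bin :: "nat \<times> nat \<Rightarrow> bool option set"
  invoked :: "(nat \<times> nat) set"
  bsent :: "((nat \<times> nat) \<times> bool option) set"
  rcv :: "(nat \<times> msg) set"
  dec :: "(bool \<times> nat) option"

text \<open>net: set of messages (source, destination, message) that were sent.\<close>
record gstate =
  net :: "(nat \<times> nat \<times> msg) set"
  loc :: "nat \<Rightarrow> lstate"

datatype action =
    Main nat
  | Echo nat "nat \<times> nat" "bool option"
  | AddBin nat "nat \<times> nat" "bool option"
  | Deliver nat nat msg
  | Byz nat nat msg
  | Stutter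

definition init_loc :: "bool \<Rightarrow> lstate" where
  "init_loc b = \<lparr>rnd = 0, pc = Start, est = Some b, bin = (\<lambda>_. {}), invoked = {},
                 bsent = {}, rcv = {}, dec = None\<rparr>"

definition init_state :: "(nat \<Rightarrow> bool) \<Rightarrow> gstate" where
  "init_state inp = \<lparr>net = {}, loc = (\<lambda>i. init_loc (inp i))\<rparr>"

definition set_loc :: "nat \<Rightarrow> lstate \<Rightarrow> gstate \<Rightarrow> gstate" where
  "set_loc i l g = g\<lparr>loc := (loc g)(i := l)\<rparr>"

definition send_all :: "nat \<Rightarrow> nat \<Rightarrow> msg \<Rightarrow> gstate \<Rightarrow> gstate" where
  "send_all n i m g = g\<lparr>net := net g \<union> {(i, j, m) | j. j < n}\<rparr>"

text \<open>Invocation of BV-Broadcast with tag T and input x (local part):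
  bin_T := empty, the background task for T is started, BVAL(T,x) is recorded as broadcast.\<close>
definition bv_start :: "nat \<times> nat \<Rightarrow> bool option \<Rightarrow> lstate \<Rightarrow> lstate" where
  "bv_start T x l = l\<lparr>bin := (bin l)(T := {}), invoked := insert T (invoked l),
                      bsent := insert (T, x) (bsent l)\<rparr>"

definition bval_count :: "lstate \<Rightarrow> nat \<times> nat \<Rightarrow> bool option \<Rightarrow> nat" where
  "bval_count l T x = card {j. (j, BVAL T x) \<in> rcv l}"

text \<open>Wait condition of SBV-Broadcast: n-t distinct senders in Q, sender j having sent
  AUX(T, vf j) with vf j in the current bin_T; the view is then vf ` Q.\<close>
definition aux_ok :: "nat \<Rightarrow> nat \<Rightarrow> lstate \<Rightarrow> nat \<times> nat \<Rightarrow> nat set \<Rightarrow> (nat \<Rightarrow> bool option) \<Rightarrow> bool" where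
  "aux_ok n t l T Q vf \<longleftrightarrow> Q \<subseteq> {..<n} \<and> card Q = n - t \<and>
      (\<forall>j\<in>Q. (j, AUX T (vf j)) \<in> rcv l \<and> vf j \<in> bin l T)"

definition auxset_ok :: "nat \<Rightarrow> nat \<Rightarrow> lstate \<Rightarrow> nat \<Rightarrow> nat set \<Rightarrow> (nat \<Rightarrow> bool option set) \<Rightarrow> bool" where
  "auxset_ok n t l r Q Sf \<longleftrightarrow> Q \<subseteq> {..<n} \<and> card Q = n - t \<and>
      (\<forall>j\<in>Q. (j, AUXSET r (Sf j)) \<in> rcv l \<and> Sf j \<subseteq> bin l (r, 0))"

definition step8 :: "bool option set \<Rightarrow> bool \<Rightarrow> lstate \<Rightarrow> lstate" where
  "step8 V s l =
     (if \<exists>b. V = {Some b} then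
        (let b = (THE b. V = {Some b}) in
          l\<lparr>est := Some b, dec := (if dec l = None then Some (b, rnd l) else dec l)\<rparr>)
      else if \<exists>b. V = {Some b, None} then l\<lparr>est := Some (THE b. V = {Some b, None})\<rparr>
      else if V = {None} then l\<lparr>est := Some s\<rparr>
      else l)"

text \<open>Steps of the main thread of non-faulty process i. coin r i is the value returned
  by random() to process i in round r.\<close>
definition main_step :: "nat \<Rightarrow> nat \<Rightarrow> (nat \<Rightarrow> nat \<Rightarrow> bool) \<Rightarrow> nat \<Rightarrow> gstate \<Rightarrow> gstate \<Rightarrow> bool" where
  "main_step n t coin i g g' \<longleftrightarrow>
     (let l = loc g i; r = rnd l in
       (pc l = Start \<and>
          g' = send_all n i (BVAL (Suc r, 0) (est l))
                 (set_loc i ((bv_start (Suc r, 0) (est l) l)\<lparr>rnd := Suc r, pc := WBin0\<rparr>) g))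
     \<or> (pc l = WBin0 \<and> (\<exists>w \<in> bin l (r, 0).
          g' = send_all n i (AUX (r, 0) w) (set_loc i (l\<lparr>pc := WAux0\<rparr>) g)))
     \<or> (pc l = WAux0 \<and> (\<exists>Q vf. aux_ok n t l (r, 0) Q vf \<and>
          g' = send_all n i (AUXSET r (vf ` Q)) (set_loc i (l\<lparr>pc := WAuxSet\<rparr>) g)))
     \<or> (pc l = WAuxSet \<and> (\<exists>Q Sf. auxset_ok n t l r Q Sf \<and>
          (let V1 = \<Union>(Sf ` Q);
               e = (if is_singleton V1 then the_elem V1 else None) in
           g' = send_all n i (BVAL (r, 1) e)
                 (set_loc i ((bv_start (r, 1) e l)\<lparr>est := e, pc := WBin1\<rparr>) g))))
     \<or> (pc l = WBin1 \<and> (\<exists>w \<in> bin l (r, 1).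
          g' = send_all n i (AUX (r, 1) w) (set_loc i (l\<lparr>pc := WAux1\<rparr>) g)))
     \<or> (pc l = WAux1 \<and> (\<exists>Q vf. aux_ok n t l (r, 1) Q vf \<and>
          g' = set_loc i ((step8 (vf ` Q) (coin r i) l)\<lparr>pc := Start\<rparr>) g)))"

text \<open>One step of the system. F is the set of Byzantine processes.\<close>
definition step :: "nat \<Rightarrow> nat \<Rightarrow> nat set \<Rightarrow> (nat \<Rightarrow> nat \<Rightarrow> bool) \<Rightarrow> action \<Rightarrow> gstate \<Rightarrow> gstate \<Rightarrow> bool" where
  "step n t F coin a g g' \<longleftrightarrow>
     (case a of
        Main i \<Rightarrow> i < n \<and> i \<notin> F \<and> main_step n t coin i g g'
      | Echo i T x \<Rightarrow> i < n \<and> i \<notin> F \<and> T \<in> invoked (loc g i) \<and>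
          bval_count (loc g i) T x \<ge> t + 1 \<and> (T, x) \<notin> bsent (loc g i) \<and>
          g' = send_all n i (BVAL T x)
                 (set_loc i ((loc g i)\<lparr>bsent := insert (T, x) (bsent (loc g i))\<rparr>) g)
      | AddBin i T x \<Rightarrow> i < n \<and> i \<notin> F \<and> T \<in> invoked (loc g i) \<and>
          bval_count (loc g i) T x \<ge> 2 * t + 1 \<and> x \<notin> bin (loc g i) T \<and>
          g' = set_loc i ((loc g i)\<lparr>bin := (bin (loc g i))(T := insert x (bin (loc g i) T))\<rparr>) g
      | Deliver j i m \<Rightarrow> (j, i, m) \<in> net g \<and> (j, m) \<notin> rcv (loc g i) \<and>
          g' = set_loc i ((loc g i)\<lparr>rcv := insert (j, m) (rcv (loc g i))\<rparr>) g
      | Byz j i m \<Rightarrow> j \<in> F \<and> j < n \<and> i < n \<and> g' = g\<lparr>net := insert (j, i, m) (net g)\<rparr>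
      | Stutter \<Rightarrow> g' = g)"

definition enabled :: "nat \<Rightarrow> nat \<Rightarrow> nat set \<Rightarrow> (nat \<Rightarrow> nat \<Rightarrow> bool) \<Rightarrow> action \<Rightarrow> gstate \<Rightarrow> bool" where
  "enabled n t F coin a g \<longleftrightarrow> (\<exists>g'. step n t F coin a g g')"

fun local_action :: "action \<Rightarrow> bool" where
  "local_action (Main i) = True"
| "local_action (Echo i T x) = True"
| "local_action (AddBin i T x) = True"
| "local_action _ = False"

definition execution :: "nat \<Rightarrow> nat \<Rightarrow> nat set \<Rightarrow> (nat \<Rightarrow> nat \<Rightarrow> bool) \<Rightarrow> (nat \<Rightarrow> bool) \<Rightarrow>
    (nat \<Rightarrow> gstate) \<Rightarrow> (nat \<Rightarrow> action) \<Rightarrow> bool" where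
  "execution n t F coin inp s lab \<longleftrightarrow>
     s 0 = init_state inp \<and> (\<forall>k. step n t F coin (lab k) (s k) (s (Suc k)))"

text \<open>Fairness: reliable channels between non-faulty processes, and non-faulty processes
  keep taking steps (weak fairness of their local actions).\<close>
definition fair :: "nat \<Rightarrow> nat \<Rightarrow> nat set \<Rightarrow> (nat \<Rightarrow> nat \<Rightarrow> bool) \<Rightarrow>
    (nat \<Rightarrow> gstate) \<Rightarrow> (nat \<Rightarrow> action) \<Rightarrow> bool" where
  "fair n t F coin s lab \<longleftrightarrow>
     (\<forall>k i j m. i < n \<and> j < n \<and> i \<notin> F \<and> j \<notin> F \<and> (j, i, m) \<in> net (s k) \<longrightarrow>
         (\<exists>k'. (j, m) \<in> rcv (loc (s k') i))) \<and>
     (\<forall>a k. local_action a \<and> (\<forall>k'\<ge>k. enabled n t F coin a (s k')) \<longrightarrow>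
         (\<exists>k'\<ge>k. lab k' = a))"

text \<open>Weak common coin with parameter d (per-execution content): with d = 2 all
  non-faulty processes always get the same bit in each round; for d > 2 the values
  may differ.\<close>
definition weak_coin :: "nat \<Rightarrow> nat \<Rightarrow> nat set \<Rightarrow> (nat \<Rightarrow> nat \<Rightarrow> bool) \<Rightarrow> bool" where
  "weak_coin d n F coin \<longleftrightarrow> 2 \<le> d \<and>
     (d = 2 \<longrightarrow> (\<forall>r i j. i < n \<and> j < n \<and> i \<notin> F \<and> j \<notin> F \<longrightarrow> coin r i = coin r j))"

end

theory Submission
  imports Defs
begin


lemma loc_set_loc[simp]: "loc (set_loc i l g) = (loc g)(i := l)" by (simp add: set_loc_def)
lemma net_set_loc[simp]: "net (set_loc i l g) = net g" by (simp add: set_loc_def)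
lemma loc_send_all[simp]: "loc (send_all n i m g) = loc g" by (simp add: send_all_def)
lemma net_send_all[simp]: "net (send_all n i m g) = net g \<union> {(i,j,m)|j. j<n}" by (simp add: send_all_def)

lemma bv_start_simps[simp]:
  "rnd (bv_start T x l) = rnd l" "pc (bv_start T x l) = pc l" "est (bv_start T x l) = est l"
  "dec (bv_start T x l) = dec l" "rcv (bv_start T x l) = rcv l"
  "bin (bv_start T x l) = (bin l)(T := {})" "invoked (bv_start T x l) = insert T (invoked l)"
  "bsent (bv_start T x l) = insert (T,x) (bsent l)"
  by (simp_all add: bv_start_def)

lemma step8_simps[simp]:
  "rnd (step8 V c l) = rnd l" "pc (step8 V c l) = pc l" "rcv (step8 V c l) = rcv l"
  "bin (step8 V c l) = bin l" "invoked (step8 V c l) = invoked l" "bsent (step8 V c l) = bsent l"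
  by (simp_all add: step8_def Let_def)

lemma step8_single:
  "est (step8 {Some b} c l) = Some b"
  "dec (step8 {Some b} c l) = (if dec l = None then Some (b, rnd l) else dec l)"
  by (simp_all add: step8_def Let_def)

lemma step8_dec:
  "dec (step8 V c l) = dec l \<or> (dec l = None \<and> (\<exists>b. V = {Some b} \<and> dec (step8 V c l) = Some (b, rnd l)))"
proof (cases "\<exists>b. V = {Some b}")
  case True
  then obtain b where b: "V = {Some b}" by blast
  then show ?thesis by (simp add: step8_single)
next
  case False
  then show ?thesis unfolding step8_def Let_def by simp
qed

fun pcidx :: "pcv \<Rightarrow> nat" where
  "pcidx Start = 6" | "pcidx WBin0 = 1" | "pcidx WAux0 = 2" | "pcidx WAuxSet = 3"
| "pcidx WBin1 = 4" | "pcidx WAux1 = 5"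

definition mu :: "lstate \<Rightarrow> nat" where "mu l = 6 * rnd l + pcidx (pc l)"

definition eV :: "nat set \<Rightarrow> (nat \<Rightarrow> bool option set) \<Rightarrow> bool option" where
  "eV Q Sf = (if is_singleton (\<Union>(Sf ` Q)) then the_elem (\<Union>(Sf ` Q)) else None)"

lemma main_step_E:
  assumes "main_step n t coin i g g'"
  obtains (S) "pc (loc g i) = Start"
    "g' = send_all n i (BVAL (Suc (rnd (loc g i)), 0) (est (loc g i)))
          (set_loc i ((bv_start (Suc (rnd (loc g i)), 0) (est (loc g i)) (loc g i))\<lparr>rnd := Suc (rnd (loc g i)), pc := WBin0\<rparr>) g)"
  | (B0) w where "pc (loc g i) = WBin0" "w \<in> bin (loc g i) (rnd (loc g i), 0)"
    "g' = send_all n i (AUX (rnd (loc g i), 0) w) (set_loc i ((loc g i)\<lparr>pc := WAux0\<rparr>) g)"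
  | (A0) Q vf where "pc (loc g i) = WAux0" "aux_ok n t (loc g i) (rnd (loc g i), 0) Q vf"
    "g' = send_all n i (AUXSET (rnd (loc g i)) (vf ` Q)) (set_loc i ((loc g i)\<lparr>pc := WAuxSet\<rparr>) g)"
  | (AS) Q Sf where "pc (loc g i) = WAuxSet" "auxset_ok n t (loc g i) (rnd (loc g i)) Q Sf"
    "g' = send_all n i (BVAL (rnd (loc g i), 1) (eV Q Sf))
          (set_loc i ((bv_start (rnd (loc g i), 1) (eV Q Sf) (loc g i))\<lparr>est := eV Q Sf, pc := WBin1\<rparr>) g)"
  | (B1) w where "pc (loc g i) = WBin1" "w \<in> bin (loc g i) (rnd (loc g i), 1)"
    "g' = send_all n i (AUX (rnd (loc g i), 1) w) (set_loc i ((loc g i)\<lparr>pc := WAux1\<rparr>) g)"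
  | (A1) Q vf where "pc (loc g i) = WAux1" "aux_ok n t (loc g i) (rnd (loc g i), 1) Q vf"
    "g' = set_loc i ((step8 (vf ` Q) (coin (rnd (loc g i)) i) (loc g i))\<lparr>pc := Start\<rparr>) g"
  using assms unfolding main_step_def Let_def eV_def
  apply (elim disjE conjE exE bexE)
  apply (rule that(1); assumption)
  apply (rule that(2); assumption)
  apply (rule that(3); assumption)
  apply (rule that(4)[unfolded eV_def]; assumption)
  apply (rule that(5); assumption)
  apply (rule that(6); assumption)
  done

lemma main_step_other: "main_step n t coin j g g' \<Longrightarrow> j \<noteq> i \<Longrightarrow> loc g' i = loc g i"
  by (erule main_step_E) auto

lemma main_step_self:
  assumes "main_step n t coin i g g'"
  shows "rcv (loc g' i) = rcv (loc g i)" "bsent (loc g i) \<subseteq> bsent (loc g' i)"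
    "invoked (loc g i) \<subseteq> invoked (loc g' i)" "mu (loc g' i) = Suc (mu (loc g i))"
    "net g \<subseteq> net g'"
  using assms by (cases rule: main_step_E; auto simp: mu_def)+

lemma step_net_mono: "step n t F coin a g g' \<Longrightarrow> net g \<subseteq> net g'"
  by (cases a) (auto simp: step_def dest: main_step_self(5))

lemma step_frame:
  assumes "step n t F coin a g g'" "a \<noteq> Main i"
  shows "rnd (loc g' i) = rnd (loc g i) \<and> pc (loc g' i) = pc (loc g i) \<and> est (loc g' i) = est (loc g i)
     \<and> dec (loc g' i) = dec (loc g i) \<and> rcv (loc g i) \<subseteq> rcv (loc g' i) \<and> bsent (loc g i) \<subseteq> bsent (loc g' i)
     \<and> invoked (loc g i) \<subseteq> invoked (loc g' i) \<and> (\<forall>T. bin (loc g i) T \<subseteq> bin (loc g' i) T)"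
  using assms by (cases a) (auto simp: step_def main_step_other)

lemma step_rcv_mono: "rcv (loc g i) \<subseteq> rcv (loc g' i)" if "step n t F coin a g g'"
proof (cases "a = Main i")
  case True
  then have "main_step n t coin i g g'" using that by (simp add: step_def)
  then show ?thesis by (simp add: main_step_self(1))
next
  case False then show ?thesis using step_frame[OF that False] by blast
qed



definition Ginv :: "nat \<Rightarrow> nat set \<Rightarrow> gstate \<Rightarrow> bool" where
  "Ginv n F g \<longleftrightarrow> (\<forall>i j m. (j, m) \<in> rcv (loc g i) \<longrightarrow> (j, i, m) \<in> net g)
    \<and> (\<forall>j i m. (j, i, m) \<in> net g \<longrightarrow> j < n)
    \<and> (\<forall>j i T x. j \<notin> F \<longrightarrow> (j, i, BVAL T x) \<in> net g \<longrightarrow> (T, x) \<in> bsent (loc g j))"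

lemma Ginv_init: "Ginv n F (init_state inp)"
  by (simp add: Ginv_def init_state_def init_loc_def)

lemma Ginv_step: assumes "step n t F coin a g g'" "Ginv n F g" shows "Ginv n F g'"
proof (cases a)
  case (Main i)
  with assms have m: "main_step n t coin i g g'" "i < n" by (auto simp: step_def)
  from m(1) show ?thesis
  proof (cases rule: main_step_E)
    case S then show ?thesis using assms(2) m(2) by (auto simp: Ginv_def)
  next
    case B0 then show ?thesis using assms(2) m(2) by (auto simp: Ginv_def)
  next
    case A0 then show ?thesis using assms(2) m(2) by (auto simp: Ginv_def)
  next
    case AS then show ?thesis using assms(2) m(2) by (auto simp: Ginv_def)
  next
    case B1 then show ?thesis using assms(2) m(2) by (auto simp: Ginv_def)
  next
    case A1 then show ?thesis using assms(2) m(2) by (auto simp: Ginv_def)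
  qed
qed (use assms in \<open>auto simp: step_def Ginv_def\<close>)



locale ctx =
  fixes n t :: nat and F :: "nat set" and coin :: "nat \<Rightarrow> nat \<Rightarrow> bool"
    and inp :: "nat \<Rightarrow> bool" and s :: "nat \<Rightarrow> gstate" and lab :: "nat \<Rightarrow> action"
    and r :: nat and v :: bool
  assumes nt: "n > 3 * t"
    and Fsub: "F \<subseteq> {..<n}" and Fcard: "card F \<le> t"
    and exec: "execution n t F coin inp s lab"
    and fair: "fair n t F coin s lab"
    and r1: "r \<ge> 1"
    and start: "\<forall>i. i < n \<and> i \<notin> F \<longrightarrow>
           (\<exists>k. pc (loc (s k) i) = Start \<and> rnd (loc (s k) i) + 1 = r \<and> est (loc (s k) i) = Some v)"
begin

abbreviation L :: "nat \<Rightarrow> nat \<Rightarrow> lstate" where "L k i \<equiv> loc (s k) i"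

lemma stepk: "step n t F coin (lab k) (s k) (s (Suc k))"
  using exec by (simp add: execution_def)

lemma s0: "s 0 = init_state inp" using exec by (simp add: execution_def)

lemma Ginv_k: "Ginv n F (s k)"
  by (induction k) (auto simp: s0 Ginv_init intro: Ginv_step[OF stepk])

lemma net_mono: "k \<le> k' \<Longrightarrow> net (s k) \<subseteq> net (s k')"
proof (induction k' rule: dec_induct)
  case (step m) then show ?case using step_net_mono[OF stepk, of m] by blast
qed simp

lemma rcv_mono: "k \<le> k' \<Longrightarrow> rcv (L k i) \<subseteq> rcv (L k' i)"
proof (induction k' rule: dec_induct)
  case (step m) then show ?case using step_rcv_mono[OF stepk, of m i] by blast
qed simp

lemma mu_step: "mu (L (Suc k) i) = (if lab k = Main i then Suc (mu (L k i)) else mu (L k i))"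
proof (cases "lab k = Main i")
  case True
  with stepk[of k] have "main_step n t coin i (s k) (s (Suc k))" by (simp add: step_def)
  then show ?thesis using True by (simp add: main_step_self(4))
next
  case False
  from step_frame[OF stepk False] show ?thesis using False by (simp add: mu_def)
qed

lemma mu_mono: "k \<le> k' \<Longrightarrow> mu (L k i) \<le> mu (L k' i)"
  by (induction k' rule: dec_induct) (auto simp: mu_step intro: le_SucI)

lemma mu_ivt: "mu (L k0 i) \<le> m \<Longrightarrow> m \<le> mu (L k1 i) \<Longrightarrow> \<exists>k. mu (L k i) = m"
proof (induction k1)
  case 0
  have "mu (L 0 i) \<le> mu (L k0 i)" using mu_mono by simp
  then show ?case using 0 by (intro exI[of _ 0]) simp
next
  case (Suc k1)
  show ?case
  proof (cases "m \<le> mu (L k1 i)")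
    case True then show ?thesis using Suc by blast
  next
    case False then show ?thesis using Suc.prems(2) mu_step[of k1 i]
      by (metis le_SucE not_less_eq_eq)
  qed
qed

lemma est_const: "k \<le> k' \<Longrightarrow> mu (L k i) = mu (L k' i) \<Longrightarrow> est (L k i) = est (L k' i)"
proof (induction k' rule: dec_induct)
  case base then show ?case by simp
next
  case (step m)
  have "mu (L k i) \<le> mu (L m i)" using step.hyps(1) mu_mono by blast
  moreover have "mu (L m i) \<le> mu (L (Suc m) i)" using mu_mono by simp
  ultimately have eq: "mu (L m i) = mu (L (Suc m) i)" using step.prems by simp
  then have "lab m \<noteq> Main i" by (simp add: mu_step split: if_splits)
  then have "est (L (Suc m) i) = est (L m i)" using step_frame[OF stepk] by blast
  then show ?case using step eq by simp
qed

lemma mu_start_r: "pc l = Start \<Longrightarrow> rnd l + 1 = r \<Longrightarrow> mu l = 6 * r"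
  by (simp add: mu_def)

lemma mu_6r: "mu l = 6 * r \<Longrightarrow> pc l = Start \<and> rnd l + 1 = r"
proof -
  assume a: "mu l = 6 * r"
  have "pcidx (pc l) \<ge> 1 \<and> pcidx (pc l) \<le> 6" by (cases "pc l") auto
  with a have "pcidx (pc l) = 6 \<and> rnd l + 1 = r" unfolding mu_def by presburger
  moreover have "pcidx (pc l) = 6 \<Longrightarrow> pc l = Start" by (cases "pc l") auto
  ultimately show ?thesis by simp
qed

lemma Efact: "i < n \<Longrightarrow> i \<notin> F \<Longrightarrow> pc (L k i) = Start \<Longrightarrow> rnd (L k i) + 1 = r \<Longrightarrow> est (L k i) = Some v"
proof -
  assume a: "i < n" "i \<notin> F" "pc (L k i) = Start" "rnd (L k i) + 1 = r"
  then obtain k0 where k0: "pc (L k0 i) = Start" "rnd (L k0 i) + 1 = r" "est (L k0 i) = Some v"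
    using start by blast
  have "mu (L k i) = mu (L k0 i)" using a k0 mu_start_r by simp
  then show ?thesis using est_const k0(3)
    by (metis nat_le_linear)
qed

end


lemma main_step_src: "main_step n t coin j g g' \<Longrightarrow> (i, x, m) \<in> net g' \<Longrightarrow> i \<noteq> j \<Longrightarrow> (i, x, m) \<in> net g"
  by (erule main_step_E) auto

lemma step_src:
  "step n t F coin a g g' \<Longrightarrow> (i, x, m) \<in> net g' \<Longrightarrow> (i, x, m) \<notin> net g \<Longrightarrow>
   a = Main i \<or> (\<exists>T y. a = Echo i T y \<and> m = BVAL T y) \<or> i \<in> F"
  by (cases a) (auto simp: step_def dest: main_step_src)

lemma aux_ok_ne: "aux_ok n t l T Q vf \<Longrightarrow> t < n \<Longrightarrow> Q \<noteq> {}"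
  by (auto simp: aux_ok_def)

context ctx begin

definition InvP :: "gstate \<Rightarrow> nat \<Rightarrow> bool" where
  "InvP g i \<longleftrightarrow>
    (\<forall>q b x. q \<ge> r \<longrightarrow> x \<noteq> Some v \<longrightarrow> ((q,b),x) \<notin> bsent (loc g i))
  \<and> (\<forall>q b x. q \<ge> r \<longrightarrow> x \<noteq> Some v \<longrightarrow> x \<notin> bin (loc g i) (q,b))
  \<and> (\<forall>j q b w. q \<ge> r \<longrightarrow> (i,j,AUX (q,b) w) \<in> net g \<longrightarrow> w = Some v)
  \<and> (\<forall>j q S. q \<ge> r \<longrightarrow> (i,j,AUXSET q S) \<in> net g \<longrightarrow> S = {Some v})
  \<and> (pc (loc g i) = Start \<and> rnd (loc g i) \<ge> r \<longrightarrow> est (loc g i) = Some v \<and> dec (loc g i) \<noteq> None)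
  \<and> (\<forall>w q. dec (loc g i) = Some (w,q) \<longrightarrow> q \<le> rnd (loc g i) \<and> (q \<ge> r \<longrightarrow> w = v))"

definition Inv :: "gstate \<Rightarrow> bool" where
  "Inv g \<longleftrightarrow> (\<forall>i. i < n \<and> i \<notin> F \<longrightarrow> InvP g i)"

definition Econd :: "gstate \<Rightarrow> bool" where
  "Econd g \<longleftrightarrow> (\<forall>i. i < n \<and> i \<notin> F \<longrightarrow> pc (loc g i) = Start \<longrightarrow> rnd (loc g i) + 1 = r \<longrightarrow> est (loc g i) = Some v)"

lemma finF: "finite F" using Fsub finite_subset by blast

lemma bad_senders:
  assumes "Ginv n F g" "Inv g" "q \<ge> r" "x \<noteq> Some v"
  shows "card {j. (j, BVAL (q,b) x) \<in> rcv (loc g i)} \<le> t"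
proof -
  have "{j. (j, BVAL (q,b) x) \<in> rcv (loc g i)} \<subseteq> F"
  proof
    fix j assume j: "j \<in> {j. (j, BVAL (q,b) x) \<in> rcv (loc g i)}"
    then have net: "(j, i, BVAL (q,b) x) \<in> net g" using assms(1) by (auto simp: Ginv_def)
    then have "j < n" using assms(1) unfolding Ginv_def by blast
    show "j \<in> F"
    proof (rule ccontr)
      assume "j \<notin> F"
      then have "((q,b),x) \<in> bsent (loc g j)" using net assms(1) by (auto simp: Ginv_def)
      moreover have "InvP g j" using \<open>j < n\<close> \<open>j \<notin> F\<close> assms(2) by (simp add: Inv_def)
      ultimately show False using assms(3,4) by (simp add: InvP_def)
    qed
  qed
  then show ?thesis using card_mono[OF finF] Fcard le_trans by blast
qed

lemma Inv_init: "Inv (init_state inp)"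
  using r1 by (simp add: Inv_def InvP_def init_state_def init_loc_def)

end

context ctx begin

lemma InvP_D:
  assumes "InvP g i"
  shows "\<And>q b x. q \<ge> r \<Longrightarrow> x \<noteq> Some v \<Longrightarrow> ((q,b),x) \<notin> bsent (loc g i)"
    "\<And>q b x. q \<ge> r \<Longrightarrow> x \<noteq> Some v \<Longrightarrow> x \<notin> bin (loc g i) (q,b)"
    "\<And>j q b w. q \<ge> r \<Longrightarrow> (i,j,AUX (q,b) w) \<in> net g \<Longrightarrow> w = Some v"
    "\<And>j q S. q \<ge> r \<Longrightarrow> (i,j,AUXSET q S) \<in> net g \<Longrightarrow> S = {Some v}"
    "pc (loc g i) = Start \<Longrightarrow> rnd (loc g i) \<ge> r \<Longrightarrow> est (loc g i) = Some v \<and> dec (loc g i) \<noteq> None"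
    "\<And>w q. dec (loc g i) = Some (w,q) \<Longrightarrow> q \<le> rnd (loc g i) \<and> (q \<ge> r \<longrightarrow> w = v)"
  using assms unfolding InvP_def by blast+

lemma bin_good: "InvP g i \<Longrightarrow> q \<ge> r \<Longrightarrow> x \<in> bin (loc g i) (q,b) \<Longrightarrow> x = Some v"
  using InvP_D(2) by blast

lemma Inv_step_notmain:
  assumes st: "step n t F coin a g g'" and G: "Ginv n F g" and I: "Inv g"
    and ci: "i < n" "i \<notin> F" and nm: "a \<noteq> Main i"
  shows "InvP g' i"
proof -
  have Ii: "InvP g i" using I ci by (simp add: Inv_def)
  have fr: "rnd (loc g' i) = rnd (loc g i)" "pc (loc g' i) = pc (loc g i)" "est (loc g' i) = est (loc g i)"
     "dec (loc g' i) = dec (loc g i)" using step_frame[OF st nm] by auto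
  have bs: "\<And>p. p \<in> bsent (loc g' i) \<Longrightarrow> p \<in> bsent (loc g i) \<or> (\<exists>T x. a = Echo i T x \<and> p = (T,x) \<and> bval_count (loc g i) T x \<ge> t+1)"
    using st nm by (cases a) (auto simp: step_def dest: main_step_other split: if_splits)
  have bn: "\<And>T x. x \<in> bin (loc g' i) T \<Longrightarrow> x \<in> bin (loc g i) T \<or> (a = AddBin i T x \<and> bval_count (loc g i) T x \<ge> 2*t+1)"
    using st nm by (cases a) (auto simp: step_def dest: main_step_other split: if_splits)
  have nt': "\<And>x m. (i,x,m) \<in> net g' \<Longrightarrow> (i,x,m) \<in> net g \<or> (\<exists>T y. m = BVAL T y)"
    using step_src[OF st] nm ci by blast
  show ?thesis unfolding InvP_def
  proof (intro conjI allI impI)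
    fix q b x assume q: "r \<le> q" "x \<noteq> Some v"
    show "((q, b), x) \<notin> bsent (loc g' i)"
    proof
      assume "((q, b), x) \<in> bsent (loc g' i)"
      from bs[OF this] show False
        using InvP_D(1)[OF Ii q] bad_senders[OF G I q, of b i] by (auto simp: bval_count_def)
    qed
  next
    fix q b x assume q: "r \<le> q" "x \<noteq> Some v"
    show "x \<notin> bin (loc g' i) (q, b)"
    proof
      assume "x \<in> bin (loc g' i) (q, b)"
      from bn[OF this] show False
        using InvP_D(2)[OF Ii q] bad_senders[OF G I q, of b i] by (auto simp: bval_count_def)
    qed
  next
    fix j q b w assume "r \<le> q" "(i, j, AUX (q, b) w) \<in> net g'"
    then show "w = Some v" using nt' InvP_D(3)[OF Ii] by blast
  next
    fix j q S assume "r \<le> q" "(i, j, AUXSET q S) \<in> net g'"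
    then show "S = {Some v}" using nt' InvP_D(4)[OF Ii] by blast
  next
    assume "pc (loc g' i) = Start \<and> r \<le> rnd (loc g' i)"
    then show "est (loc g' i) = Some v" using fr InvP_D(5)[OF Ii] by simp
  next
    assume "pc (loc g' i) = Start \<and> r \<le> rnd (loc g' i)"
    then show "dec (loc g' i) \<noteq> None" using fr InvP_D(5)[OF Ii] by simp
  next
    fix w q assume "dec (loc g' i) = Some (w, q)"
    then show "q \<le> rnd (loc g' i)" using fr InvP_D(6)[OF Ii] by simp
  next
    fix w q assume "dec (loc g' i) = Some (w, q)" "r \<le> q"
    then show "w = v" using fr InvP_D(6)[OF Ii] by simp
  qed
qed

end

context ctx begin

lemma Q_has_correct:
  assumes "Q \<subseteq> {..<n}" "card Q = n - t"
  shows "\<exists>j\<in>Q. j \<notin> F"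
proof (rule ccontr)
  assume "\<not> ?thesis"
  then have "Q \<subseteq> F" by blast
  then have "card Q \<le> card F" using card_mono[OF finF] by blast
  then show False using assms Fcard nt by linarith
qed

lemma Inv_step_main:
  assumes m: "main_step n t coin i g g'" and G: "Ginv n F g" and I: "Inv g" and E: "Econd g"
    and ci: "i < n" "i \<notin> F"
  shows "InvP g' i"
proof -
  have Ii: "InvP g i" using I ci by (simp add: Inv_def)
  note D = InvP_D[OF Ii]
  let ?l = "loc g i"
  from m show ?thesis
  proof (cases rule: main_step_E)
    case S
    have e: "Suc (rnd ?l) \<ge> r \<Longrightarrow> est ?l = Some v"
    proof -
      assume a: "Suc (rnd ?l) \<ge> r"
      show ?thesis
      proof (cases "rnd ?l \<ge> r")
        case True then show ?thesis using D(5) S(1) by simp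
      next
        case False then have "rnd ?l + 1 = r" using a by simp
        then show ?thesis using E ci S(1) by (simp add: Econd_def)
      qed
    qed
    show ?thesis using S(2) D e unfolding InvP_def
      apply (simp)
      apply (intro conjI allI impI)
      apply (auto dest: le_SucI)
      done
  next
    case (B0 w)
    have "rnd ?l \<ge> r \<Longrightarrow> w = Some v" using D(2) B0(2) by blast
    then show ?thesis using B0(1,3) D unfolding InvP_def by auto
  next
    case (A0 Q vf)
    have ne: "Q \<noteq> {}" using aux_ok_ne[OF A0(2)] nt by simp
    have "rnd ?l \<ge> r \<Longrightarrow> vf ` Q = {Some v}"
    proof -
      assume "rnd ?l \<ge> r"
      then have "\<forall>j\<in>Q. vf j = Some v" using A0(2) D(2) unfolding aux_ok_def by blast
      then show ?thesis using ne by auto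
    qed
    then show ?thesis using A0(1,3) D unfolding InvP_def by auto
  next
    case (AS Q Sf)
    have ev: "rnd ?l \<ge> r \<Longrightarrow> eV Q Sf = Some v"
    proof -
      assume rr: "rnd ?l \<ge> r"
      have ok: "Q \<subseteq> {..<n}" "card Q = n - t"
        "\<forall>j\<in>Q. (j, AUXSET (rnd ?l) (Sf j)) \<in> rcv ?l \<and> Sf j \<subseteq> bin ?l (rnd ?l, 0)"
        using AS(2) by (auto simp: auxset_ok_def)
      have sub: "\<Union>(Sf ` Q) \<subseteq> {Some v}" using ok(3) D(2) rr by blast
      obtain j where j: "j \<in> Q" "j \<notin> F" using Q_has_correct[OF ok(1,2)] by blast
      have "(j, i, AUXSET (rnd ?l) (Sf j)) \<in> net g" using ok(3) j G by (auto simp: Ginv_def)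
      moreover have "InvP g j" using I j ok(1) by (auto simp: Inv_def)
      ultimately have "Sf j = {Some v}" using InvP_D(4) rr by blast
      then have "\<Union>(Sf ` Q) = {Some v}" using sub j by blast
      then show ?thesis by (simp add: eV_def)
    qed
    then show ?thesis using AS(1,3) D unfolding InvP_def by auto
  next
    case (B1 w)
    have "rnd ?l \<ge> r \<Longrightarrow> w = Some v" using D(2) B1(2) by blast
    then show ?thesis using B1(1,3) D unfolding InvP_def by auto
  next
    case (A1 Q vf)
    have ne: "Q \<noteq> {}" using aux_ok_ne[OF A1(2)] nt by simp
    have V: "rnd ?l \<ge> r \<Longrightarrow> vf ` Q = {Some v}"
    proof -
      assume "rnd ?l \<ge> r"
      then have "\<forall>j\<in>Q. vf j = Some v" using A1(2) D(2) unfolding aux_ok_def by blast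
      then show ?thesis using ne by auto
    qed
    let ?l' = "step8 (vf ` Q) (coin (rnd ?l) i) ?l"
    have c5: "rnd ?l \<ge> r \<Longrightarrow> est ?l' = Some v \<and> dec ?l' \<noteq> None"
      using V step8_single by auto
    have c6: "\<And>w q. dec ?l' = Some (w,q) \<Longrightarrow> q \<le> rnd ?l \<and> (q \<ge> r \<longrightarrow> w = v)"
    proof -
      fix w q assume a: "dec ?l' = Some (w,q)"
      from step8_dec[of "vf ` Q" "coin (rnd ?l) i" ?l] show "q \<le> rnd ?l \<and> (q \<ge> r \<longrightarrow> w = v)"
      proof
        assume "dec ?l' = dec ?l" then have "dec ?l = Some (w,q)" using a by simp
        then show ?thesis using D(6) by blast
      next
        assume "dec ?l = None \<and> (\<exists>b. vf ` Q = {Some b} \<and> dec ?l' = Some (b, rnd ?l))"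
        then obtain b where b: "vf ` Q = {Some b}" "dec ?l' = Some (b, rnd ?l)" by blast
        then have "q = rnd ?l" "w = b" using a by auto
        then show ?thesis using V b(1) by auto
      qed
    qed
    show ?thesis using A1(1,3) D c5 c6 unfolding InvP_def by auto
  qed
qed

lemma Inv_step:
  assumes st: "step n t F coin a g g'" and G: "Ginv n F g" and I: "Inv g" and E: "Econd g"
  shows "Inv g'"
  unfolding Inv_def
proof (intro allI impI)
  fix i assume ci: "i < n \<and> i \<notin> F"
  show "InvP g' i"
  proof (cases "a = Main i")
    case True
    then have "main_step n t coin i g g'" using st by (simp add: step_def)
    then show ?thesis using Inv_step_main G I E ci by blast
  next
    case False then show ?thesis using Inv_step_notmain st G I ci by blast
  qed
qed

lemma Inv_k: "Inv (s k)"
proof (induction k)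
  case 0 then show ?case by (simp add: s0 Inv_init)
next
  case (Suc k)
  have "Econd (s k)" using Efact by (simp add: Econd_def)
  then show ?case using Inv_step[OF stepk Ginv_k Suc.IH] by blast
qed

end


lemma pcidx_range: "1 \<le> pcidx p \<and> pcidx p \<le> 6" by (cases p) auto

lemma pcidx_inv: "pcidx p = 6 \<longleftrightarrow> p = Start" "pcidx p = 1 \<longleftrightarrow> p = WBin0" "pcidx p = 2 \<longleftrightarrow> p = WAux0"
  "pcidx p = 3 \<longleftrightarrow> p = WAuxSet" "pcidx p = 4 \<longleftrightarrow> p = WBin1" "pcidx p = 5 \<longleftrightarrow> p = WAux1"
  by (cases p, simp_all)+

lemma pcidx_inv1: "pcidx p = Suc 0 \<longleftrightarrow> p = WBin0" by (cases p) simp_all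

lemma mu_dec: "mu l = 6*q + p \<Longrightarrow> 1 \<le> p \<Longrightarrow> p \<le> 6 \<Longrightarrow> rnd l = q \<and> pcidx (pc l) = p"
  using pcidx_range[of "pc l"] unfolding mu_def by presburger

lemma en_of: "enabled n t F coin (Main i) g" if "i < n" "i \<notin> F" "main_step n t coin i g g'"
  unfolding enabled_def step_def using that by (intro exI[of _ g']) simp

lemma ms_start: "pc (loc g i) = Start \<Longrightarrow> \<exists>g'. main_step n t coin i g g'"
  unfolding main_step_def Let_def by auto

lemma ms_B0: "pc (loc g i) = WBin0 \<Longrightarrow> w \<in> bin (loc g i) (rnd (loc g i), 0) \<Longrightarrow> \<exists>g'. main_step n t coin i g g'"
  unfolding main_step_def Let_def by auto

lemma ms_A0: "pc (loc g i) = WAux0 \<Longrightarrow> aux_ok n t (loc g i) (rnd (loc g i), 0) Q vf \<Longrightarrow> \<exists>g'. main_step n t coin i g g'"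
  unfolding main_step_def Let_def by auto

lemma ms_AS: "pc (loc g i) = WAuxSet \<Longrightarrow> auxset_ok n t (loc g i) (rnd (loc g i)) Q Sf \<Longrightarrow> \<exists>g'. main_step n t coin i g g'"
  unfolding main_step_def Let_def by auto

lemma ms_B1: "pc (loc g i) = WBin1 \<Longrightarrow> w \<in> bin (loc g i) (rnd (loc g i), 1) \<Longrightarrow> \<exists>g'. main_step n t coin i g g'"
  unfolding main_step_def Let_def by auto

lemma ms_A1: "pc (loc g i) = WAux1 \<Longrightarrow> aux_ok n t (loc g i) (rnd (loc g i), 1) Q vf \<Longrightarrow> \<exists>g'. main_step n t coin i g g'"
  unfolding main_step_def Let_def by auto

definition tagm :: "nat \<times> nat \<Rightarrow> nat" where
  "tagm T = (if snd T = 0 then 6 * fst T + 1 else 6 * fst T + 4)"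

lemma bin_step:
  assumes st: "step n t F coin a g g'" and x: "x \<in> bin (loc g i) T" and m: "mu (loc g i) \<ge> tagm T"
  shows "x \<in> bin (loc g' i) T"
proof (cases "a = Main i")
  case True
  then have ms: "main_step n t coin i g g'" using st by (simp add: step_def)
  from ms show ?thesis
  proof (cases rule: main_step_E)
    case S
    have "T \<noteq> (Suc (rnd (loc g i)), 0)" using m S(1) by (auto simp: tagm_def mu_def)
    then show ?thesis using S(2) x by simp
  next
    case (AS Q Sf)
    have "T \<noteq> (rnd (loc g i), 1)" using m AS(1) by (auto simp: tagm_def mu_def)
    then show ?thesis using AS(3) x by simp
  qed (use x in auto)
next
  case False then show ?thesis using step_frame[OF st False] x by blast
qed

lemma invoked_step: "step n t F coin a g g' \<Longrightarrow> invoked (loc g i) \<subseteq> invoked (loc g' i)"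
proof (cases "a = Main i")
  case True
  assume st: "step n t F coin a g g'"
  then have "main_step n t coin i g g'" using True by (simp add: step_def)
  then show ?thesis by (rule main_step_self(3))
next
  case False
  assume st: "step n t F coin a g g'"
  then show ?thesis using step_frame[OF st False] by blast
qed

lemma common_time:
  fixes P :: "'a \<Rightarrow> nat \<Rightarrow> bool"
  assumes "finite Q" "\<forall>j\<in>Q. \<exists>k. P j k" "\<And>j k k'. P j k \<Longrightarrow> k \<le> k' \<Longrightarrow> P j k'"
  shows "\<exists>K. \<forall>j\<in>Q. \<forall>k\<ge>K. P j k"
  using assms(1,2)
proof (induction Q rule: finite_induct)
  case empty then show ?case by simp
next
  case (insert x Q)
  have "\<forall>j\<in>Q. \<exists>k. P j k" using insert.prems by simp
  from insert.IH[OF this] obtain K where K: "\<forall>j\<in>Q. \<forall>k\<ge>K. P j k" by (elim exE)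
  have "\<exists>k. P x k" using insert.prems by simp
  then obtain kx where kx: "P x kx" by (elim exE)
  show ?case
  proof (rule exI[of _ "max K kx"], intro ballI allI impI)
    fix j k assume j: "j \<in> insert x Q" "max K kx \<le> k"
    show "P j k"
    proof (cases "j = x")
      case True
      have "kx \<le> k" using order_trans[OF max.cobounded2 j(2)] .
      then show ?thesis using assms(3)[OF kx] True by blast
    next
      case False then have "j \<in> Q" using j(1) by simp
      moreover have "K \<le> k" using order_trans[OF max.cobounded1 j(2)] .
      ultimately show ?thesis using K by blast
    qed
  qed
qed


context ctx begin

abbreviation C :: "nat set" where "C \<equiv> {j. j < n \<and> j \<notin> F}"

lemma C_eq: "C = {..<n} - F" by auto

lemma finC: "finite C" by (simp add: C_eq)

lemma card_C: "card C \<ge> n - t"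
proof -
  have "card C = n - card F" unfolding C_eq using card_Diff_subset[OF finF Fsub] by simp
  then show ?thesis using Fcard by simp
qed

lemma subC: "\<exists>Q. Q \<subseteq> C \<and> card Q = n - t"
  using obtain_subset_with_card_n[OF card_C] by metis

lemma mu0: "mu (L 0 i) = 6" by (simp add: s0 init_state_def init_loc_def mu_def)

lemma fair1: "\<forall>k i j m. i < n \<and> j < n \<and> i \<notin> F \<and> j \<notin> F \<and> (j, i, m) \<in> net (s k) \<longrightarrow>
         (\<exists>k'. (j, m) \<in> rcv (loc (s k') i))"
  using fair unfolding fair_def by (rule conjunct1)

lemma fair2: "\<forall>a k. local_action a \<and> (\<forall>k'\<ge>k. enabled n t F coin a (s k')) \<longrightarrow>
         (\<exists>k'\<ge>k. lab k' = a)"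
  using fair unfolding fair_def by (rule conjunct2)

lemma progress:
  assumes ci: "i < n" "i \<notin> F" and k1: "mu (L k1 i) \<ge> m"
    and en: "\<forall>k\<ge>k2. mu (L k i) = m \<longrightarrow> enabled n t F coin (Main i) (s k)"
  shows "\<exists>k. mu (L k i) \<ge> Suc m"
proof (rule ccontr)
  assume "\<not> ?thesis"
  then have le: "\<And>k. mu (L k i) \<le> m" by (meson not_less_eq_eq)
  define K where "K = max k1 k2"
  have eq: "\<And>k. k \<ge> K \<Longrightarrow> mu (L k i) = m"
  proof -
    fix k assume "k \<ge> K"
    then have "k1 \<le> k" by (simp add: K_def)
    then have "mu (L k1 i) \<le> mu (L k i)" by (rule mu_mono)
    then show "mu (L k i) = m" using k1 le[of k] by simp
  qed
  have "\<forall>k'\<ge>K. enabled n t F coin (Main i) (s k')" using en eq by (simp add: K_def)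
  moreover have "local_action (Main i)" by simp
  ultimately have "\<exists>k'\<ge>K. lab k' = Main i"
    using spec[OF spec[OF fair2, of "Main i"], of K] by simp
  then obtain k' where k': "k' \<ge> K" "lab k' = Main i" by blast
  then have "mu (L (Suc k') i) = Suc m" using mu_step[of k' i] eq[OF k'(1)] by simp
  then show False using le[of "Suc k'"] by simp
qed

lemma deliv: "i < n \<Longrightarrow> j < n \<Longrightarrow> i \<notin> F \<Longrightarrow> j \<notin> F \<Longrightarrow> (j, i, m) \<in> net (s k) \<Longrightarrow> \<exists>k'. (j, m) \<in> rcv (L k' i)"
  using spec[OF spec[OF spec[OF spec[OF fair1, of k], of i], of j], of m] by simp

lemma deliv_all:
  assumes ci: "i < n" "i \<notin> F" and all: "\<forall>j. j < n \<and> j \<notin> F \<longrightarrow> (\<exists>k. (j, i, mf j) \<in> net (s k))"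
  shows "\<exists>K. \<forall>j\<in>C. \<forall>k\<ge>K. (j, mf j) \<in> rcv (L k i)"
proof (rule common_time[OF finC])
  show "\<forall>j\<in>C. \<exists>k. (j, mf j) \<in> rcv (L k i)" using all deliv ci by blast
next
  fix j k k' assume "(j, mf j) \<in> rcv (L k i)" "k \<le> k'"
  then show "(j, mf j) \<in> rcv (L k' i)" using rcv_mono by blast
qed

lemma invoked_mono: "k \<le> k' \<Longrightarrow> invoked (L k i) \<subseteq> invoked (L k' i)"
proof (induction k' rule: dec_induct)
  case (step m) then show ?case using invoked_step[OF stepk, of m i] by blast
qed simp

lemma bin_mono: "k \<le> k' \<Longrightarrow> mu (L k i) \<ge> tagm T \<Longrightarrow> x \<in> bin (L k i) T \<Longrightarrow> x \<in> bin (L k' i) T"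
proof (induction k' rule: dec_induct)
  case (step m)
  have "mu (L k i) \<le> mu (L m i)" using step.hyps(1) by (rule mu_mono)
  then show ?case using bin_step[OF stepk step.IH[OF step.prems]] step.prems(1) by simp
qed simp

lemma stage_gen:
  assumes m6: "6 \<le> m" and est: "\<And>k. mu (L k j) = m \<Longrightarrow> lab k = Main j \<Longrightarrow> P (s (Suc k))"
    and stab: "\<And>k. P (s k) \<Longrightarrow> P (s (Suc k))"
  shows "mu (L k j) > m \<Longrightarrow> P (s k)"
proof (induction k)
  case 0 then show ?case using mu0 m6 by simp
next
  case (Suc k)
  show ?case
  proof (cases "mu (L k j) > m")
    case True then show ?thesis using Suc.IH stab by blast
  next
    case False
    show ?thesis
    proof (cases "lab k = Main j")
      case True
      then have "mu (L k j) = m" using Suc.prems False mu_step[of k j] by simp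
      then show ?thesis using est True by blast
    next
      case f2: False
      then show ?thesis using Suc.prems False mu_step[of k j] by simp
    qed
  qed
qed

lemma ms_k: "lab k = Main j \<Longrightarrow> main_step n t coin j (s k) (s (Suc k))"
  using stepk[of k] by (simp add: step_def)

lemma net_stab: "(\<forall>i<n. x i \<in> net (s k)) \<Longrightarrow> (\<forall>i<n. x i \<in> net (s (Suc k)))"
  using step_net_mono[OF stepk] by blast

lemma inv_stab: "T \<in> invoked (L k j) \<Longrightarrow> T \<in> invoked (L (Suc k) j)"
  using invoked_step[OF stepk] by blast

lemma r6: "6 \<le> 6 * r" using r1 by simp

lemma F1:
  assumes cj: "j < n" "j \<notin> F"
  shows "mu (L k j) > 6 * r \<Longrightarrow> (\<forall>i<n. (j, i, BVAL (r,0) (Some v)) \<in> net (s k)) \<and> (r,0) \<in> invoked (L k j)"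
proof (rule stage_gen[OF r6])
  fix k assume mu: "mu (L k j) = 6 * r" and lab: "lab k = Main j"
  from mu_6r[OF mu] have pc: "pc (L k j) = Start" and rr: "Suc (rnd (L k j)) = r" by auto
  have es: "est (L k j) = Some v" using Efact cj pc rr by simp
  from ms_k[OF lab] show "(\<forall>i<n. (j, i, BVAL (r,0) (Some v)) \<in> net (s (Suc k))) \<and> (r,0) \<in> invoked (L (Suc k) j)"
  proof (cases rule: main_step_E)
    case S then show ?thesis using rr es by simp
  qed (simp_all only: pc pcv.distinct)
next
  fix k assume "(\<forall>i<n. (j, i, BVAL (r,0) (Some v)) \<in> net (s k)) \<and> (r,0) \<in> invoked (L k j)"
  then show "(\<forall>i<n. (j, i, BVAL (r,0) (Some v)) \<in> net (s (Suc k))) \<and> (r,0) \<in> invoked (L (Suc k) j)"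
    using net_stab[of "\<lambda>i. (j, i, BVAL (r,0) (Some v))" k] inv_stab[of "(r,0)" k j] by blast
qed

lemma F2:
  assumes cj: "j < n" "j \<notin> F"
  shows "mu (L k j) > 6 * r + 1 \<Longrightarrow> (\<forall>i<n. (j, i, AUX (r,0) (Some v)) \<in> net (s k))"
proof (rule stage_gen)
  show "6 \<le> 6 * r + 1" using r6 by simp
  fix k assume mu: "mu (L k j) = 6 * r + 1" and lab: "lab k = Main j"
  from mu_dec[OF mu] have rr: "rnd (L k j) = r" and pc: "pc (L k j) = WBin0" by (auto simp: pcidx_inv pcidx_inv1)
  from ms_k[OF lab] show "\<forall>i<n. (j, i, AUX (r,0) (Some v)) \<in> net (s (Suc k))"
  proof (cases rule: main_step_E)
    case (B0 w)
    have "w = Some v" using bin_good[of "s k" j r w 0] B0(2) rr Inv_k cj by (simp add: Inv_def)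
    then show ?thesis using B0(3) rr by simp
  qed (simp_all only: pc pcv.distinct)
next
  fix k assume "\<forall>i<n. (j, i, AUX (r,0) (Some v)) \<in> net (s k)"
  then show "\<forall>i<n. (j, i, AUX (r,0) (Some v)) \<in> net (s (Suc k))" by (rule net_stab)
qed

lemma F3:
  assumes cj: "j < n" "j \<notin> F"
  shows "mu (L k j) > 6 * r + 2 \<Longrightarrow> (\<forall>i<n. (j, i, AUXSET r {Some v}) \<in> net (s k))"
proof (rule stage_gen)
  show "6 \<le> 6 * r + 2" using r6 by simp
  fix k assume mu: "mu (L k j) = 6 * r + 2" and lab: "lab k = Main j"
  from mu_dec[OF mu] have rr: "rnd (L k j) = r" and pc: "pc (L k j) = WAux0" by (auto simp: pcidx_inv pcidx_inv1)
  from ms_k[OF lab] show "\<forall>i<n. (j, i, AUXSET r {Some v}) \<in> net (s (Suc k))"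
  proof (cases rule: main_step_E)
    case (A0 Q vf)
    have inn: "(j, j, AUXSET r (vf ` Q)) \<in> net (s (Suc k))" using A0(3) rr cj by simp
    have "InvP (s (Suc k)) j" using Inv_k cj by (simp add: Inv_def)
    then have "vf ` Q = {Some v}" using InvP_D(4) inn by blast
    then show ?thesis using A0(3) rr by simp
  qed (simp_all only: pc pcv.distinct)
next
  fix k assume "\<forall>i<n. (j, i, AUXSET r {Some v}) \<in> net (s k)"
  then show "\<forall>i<n. (j, i, AUXSET r {Some v}) \<in> net (s (Suc k))" by (rule net_stab)
qed

lemma F4:
  assumes cj: "j < n" "j \<notin> F"
  shows "mu (L k j) > 6 * r + 3 \<Longrightarrow> (\<forall>i<n. (j, i, BVAL (r,1) (Some v)) \<in> net (s k)) \<and> (r,1) \<in> invoked (L k j)"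
proof (rule stage_gen)
  show "6 \<le> 6 * r + 3" using r6 by simp
  fix k assume mu: "mu (L k j) = 6 * r + 3" and lab: "lab k = Main j"
  from mu_dec[OF mu] have rr: "rnd (L k j) = r" and pc: "pc (L k j) = WAuxSet" by (auto simp: pcidx_inv pcidx_inv1)
  from ms_k[OF lab] show "(\<forall>i<n. (j, i, BVAL (r,1) (Some v)) \<in> net (s (Suc k))) \<and> (r,1) \<in> invoked (L (Suc k) j)"
  proof (cases rule: main_step_E)
    case (AS Q Sf)
    have inn: "((r,1), eV Q Sf) \<in> bsent (L (Suc k) j)" using AS(3) rr by simp
    have "InvP (s (Suc k)) j" using Inv_k cj by (simp add: Inv_def)
    then have "eV Q Sf = Some v" using InvP_D(1) inn by blast
    then show ?thesis using AS(3) rr by simp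
  qed (simp_all only: pc pcv.distinct)
next
  fix k assume "(\<forall>i<n. (j, i, BVAL (r,1) (Some v)) \<in> net (s k)) \<and> (r,1) \<in> invoked (L k j)"
  then show "(\<forall>i<n. (j, i, BVAL (r,1) (Some v)) \<in> net (s (Suc k))) \<and> (r,1) \<in> invoked (L (Suc k) j)"
    using net_stab[of "\<lambda>i. (j, i, BVAL (r,1) (Some v))" k] inv_stab[of "(r,1)" k j] by blast
qed

lemma F5:
  assumes cj: "j < n" "j \<notin> F"
  shows "mu (L k j) > 6 * r + 4 \<Longrightarrow> (\<forall>i<n. (j, i, AUX (r,1) (Some v)) \<in> net (s k))"
proof (rule stage_gen)
  show "6 \<le> 6 * r + 4" using r6 by simp
  fix k assume mu: "mu (L k j) = 6 * r + 4" and lab: "lab k = Main j"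
  from mu_dec[OF mu] have rr: "rnd (L k j) = r" and pc: "pc (L k j) = WBin1" by (auto simp: pcidx_inv pcidx_inv1)
  from ms_k[OF lab] show "\<forall>i<n. (j, i, AUX (r,1) (Some v)) \<in> net (s (Suc k))"
  proof (cases rule: main_step_E)
    case (B1 w)
    have "w = Some v" using bin_good[of "s k" j r w 1] B1(2) rr Inv_k cj by (simp add: Inv_def)
    then show ?thesis using B1(3) rr by simp
  qed (simp_all only: pc pcv.distinct)
next
  fix k assume "\<forall>i<n. (j, i, AUX (r,1) (Some v)) \<in> net (s k)"
  then show "\<forall>i<n. (j, i, AUX (r,1) (Some v)) \<in> net (s (Suc k))" by (rule net_stab)
qed

end

context ctx begin

lemma bin_event:
  assumes ci: "i < n" "i \<notin> F" and k0: "mu (L k0 i) \<ge> tagm (r,b)" "(r,b) \<in> invoked (L k0 i)"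
    and all: "\<forall>j. j < n \<and> j \<notin> F \<longrightarrow> (\<exists>k. (j, i, BVAL (r,b) (Some v)) \<in> net (s k))"
  shows "\<exists>k\<ge>k0. Some v \<in> bin (L k i) (r,b)"
proof (rule ccontr)
  assume nb: "\<not> ?thesis"
  obtain K1 where K1: "\<forall>j\<in>C. \<forall>k\<ge>K1. (j, BVAL (r,b) (Some v)) \<in> rcv (L k i)"
    using deliv_all[OF ci all] by (elim exE)
  define K where "K = max K1 k0"
  have en: "\<forall>k'\<ge>K. enabled n t F coin (AddBin i (r,b) (Some v)) (s k')"
  proof (intro allI impI)
    fix k assume kK: "K \<le> k"
    have "k0 \<le> k" using kK by (simp add: K_def)
    then have inv: "(r,b) \<in> invoked (L k i)" using invoked_mono[of k0 k i] k0(2) by blast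
    have nin: "Some v \<notin> bin (L k i) (r,b)" using nb \<open>k0 \<le> k\<close> by blast
    have "K1 \<le> k" using kK by (simp add: K_def)
    then have sub: "C \<subseteq> {j. (j, BVAL (r,b) (Some v)) \<in> rcv (L k i)}" using K1 by blast
    have fin: "finite {j. (j, BVAL (r,b) (Some v)) \<in> rcv (L k i)}"
    proof (rule finite_subset[of _ "{..<n}"])
      show "{j. (j, BVAL (r,b) (Some v)) \<in> rcv (L k i)} \<subseteq> {..<n}"
        using Ginv_k[of k] unfolding Ginv_def by blast
    qed simp
    have "card C \<le> bval_count (L k i) (r,b) (Some v)" unfolding bval_count_def using card_mono[OF fin sub] .
    then have cnt: "bval_count (L k i) (r,b) (Some v) \<ge> 2*t+1" using card_C nt by linarith
    show "enabled n t F coin (AddBin i (r,b) (Some v)) (s k)"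
      unfolding enabled_def step_def using ci inv cnt nin by simp
  qed
  have "local_action (AddBin i (r,b) (Some v))" by simp
  then have "\<exists>k'\<ge>K. lab k' = AddBin i (r,b) (Some v)"
    using spec[OF spec[OF fair2, of "AddBin i (r,b) (Some v)"], of K] en by simp
  then obtain k' where k': "k' \<ge> K" "lab k' = AddBin i (r,b) (Some v)" by blast
  have "Some v \<in> bin (L (Suc k') i) (r,b)" using stepk[of k'] k'(2) by (simp add: step_def)
  moreover have "Suc k' \<ge> k0" using k'(1) by (simp add: K_def)
  ultimately show False using nb by blast
qed

definition reach :: "nat \<Rightarrow> bool" where
  "reach m \<longleftrightarrow> (\<forall>i. i < n \<and> i \<notin> F \<longrightarrow> (\<exists>k. mu (L k i) \<ge> m))"

lemma reachD: "reach m \<Longrightarrow> i < n \<Longrightarrow> i \<notin> F \<Longrightarrow> \<exists>k. mu (L k i) \<ge> m"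
  unfolding reach_def by blast

lemma en_ex: "i < n \<Longrightarrow> i \<notin> F \<Longrightarrow> \<exists>g'. main_step n t coin i g g' \<Longrightarrow> enabled n t F coin (Main i) g"
  using en_of by blast

lemma R0: "reach (6 * r)"
  unfolding reach_def
proof (intro allI impI)
  fix i assume "i < n \<and> i \<notin> F"
  then obtain k where "pc (L k i) = Start" "rnd (L k i) + 1 = r" using start by blast
  then show "\<exists>k. mu (L k i) \<ge> 6 * r" using mu_start_r by (intro exI[of _ k]) simp
qed

lemma R1: "reach (6 * r + 1)"
  unfolding reach_def
proof (intro allI impI)
  fix i assume ci: "i < n \<and> i \<notin> F"
  obtain k1 where k1: "mu (L k1 i) \<ge> 6 * r" using reachD[OF R0] ci by blast
  have "\<forall>k\<ge>0. mu (L k i) = 6 * r \<longrightarrow> enabled n t F coin (Main i) (s k)"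
  proof (intro allI impI)
    fix k assume "mu (L k i) = 6 * r"
    then have "pc (L k i) = Start" using mu_6r by blast
    then show "enabled n t F coin (Main i) (s k)" using en_ex ms_start ci by blast
  qed
  from progress[OF _ _ k1 this] ci show "\<exists>k. mu (L k i) \<ge> 6 * r + 1" by simp
qed

lemma bin0: assumes ci: "i < n" "i \<notin> F"
  shows "\<exists>k. Some v \<in> bin (L k i) (r,0) \<and> mu (L k i) \<ge> 6 * r + 1"
proof -
  obtain k0 where k0: "mu (L k0 i) \<ge> 6 * r + 1" using reachD[OF R1] ci by blast
  have inv: "(r,0) \<in> invoked (L k0 i)" using F1[OF ci, of k0] k0 by simp
  have all: "\<forall>j. j < n \<and> j \<notin> F \<longrightarrow> (\<exists>k. (j, i, BVAL (r,0) (Some v)) \<in> net (s k))"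
  proof (intro allI impI)
    fix j assume cj: "j < n \<and> j \<notin> F"
    obtain kj where "mu (L kj j) \<ge> 6 * r + 1" using reachD[OF R1] cj by blast
    then have "\<forall>i<n. (j, i, BVAL (r,0) (Some v)) \<in> net (s kj)" using F1[of j kj] cj by simp
    then show "\<exists>k. (j, i, BVAL (r,0) (Some v)) \<in> net (s k)" using ci by blast
  qed
  have tg: "mu (L k0 i) \<ge> tagm (r,0)" using k0 by (simp add: tagm_def)
  obtain k where k: "k \<ge> k0" "Some v \<in> bin (L k i) (r,0)" using bin_event[OF ci tg inv all] by blast
  have "mu (L k0 i) \<le> mu (L k i)" using k(1) by (rule mu_mono)
  then show ?thesis using k k0 by (intro exI[of _ k]) simp
qed

lemma R2: "reach (6 * r + 2)"
  unfolding reach_def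
proof (intro allI impI)
  fix i assume ci: "i < n \<and> i \<notin> F"
  obtain k1 where k1: "mu (L k1 i) \<ge> 6 * r + 1" using reachD[OF R1] ci by blast
  obtain kb where kb: "Some v \<in> bin (L kb i) (r,0)" "mu (L kb i) \<ge> 6 * r + 1" using bin0 ci by blast
  have "\<forall>k\<ge>kb. mu (L k i) = 6 * r + 1 \<longrightarrow> enabled n t F coin (Main i) (s k)"
  proof (intro allI impI)
    fix k assume kk: "kb \<le> k" and mu: "mu (L k i) = 6 * r + 1"
    from mu_dec[OF mu] have rr: "rnd (L k i) = r" and pc: "pc (L k i) = WBin0" by (auto simp: pcidx_inv1)
    have "Some v \<in> bin (L k i) (r,0)" using bin_mono[OF kk _ kb(1)] kb(2) by (simp add: tagm_def)
    then show "enabled n t F coin (Main i) (s k)" using en_ex ms_B0[OF pc] rr ci by simp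
  qed
  from progress[OF _ _ k1 this] ci show "\<exists>k. mu (L k i) \<ge> 6 * r + 2" by simp
qed

end

context ctx begin

lemma all_msgs:
  assumes R: "reach m'" and mm: "m < m'"
    and Fm: "\<And>j k. j < n \<Longrightarrow> j \<notin> F \<Longrightarrow> mu (L k j) > m \<Longrightarrow> (\<forall>i<n. (j, i, mf j) \<in> net (s k))"
    and ci: "i < n" "i \<notin> F"
  shows "\<forall>j. j < n \<and> j \<notin> F \<longrightarrow> (\<exists>k. (j, i, mf j) \<in> net (s k))"
proof (intro allI impI)
  fix j assume cj: "j < n \<and> j \<notin> F"
  obtain kj where "mu (L kj j) \<ge> m'" using reachD[OF R] cj by blast
  then have "mu (L kj j) > m" using mm by simp
  then have "\<forall>i<n. (j, i, mf j) \<in> net (s kj)" using Fm cj by simp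
  then show "\<exists>k. (j, i, mf j) \<in> net (s k)" using ci by blast
qed

lemma R3: "reach (6 * r + 3)"
  unfolding reach_def
proof (intro allI impI)
  fix i assume ci: "i < n \<and> i \<notin> F"
  obtain k1 where k1: "mu (L k1 i) \<ge> 6 * r + 2" using reachD[OF R2] ci by blast
  obtain kb where kb: "Some v \<in> bin (L kb i) (r,0)" "mu (L kb i) \<ge> 6 * r + 1" using bin0 ci by blast
  have all: "\<forall>j. j < n \<and> j \<notin> F \<longrightarrow> (\<exists>k. (j, i, AUX (r,0) (Some v)) \<in> net (s k))"
    using all_msgs[OF R2, of "6 * r + 1" "\<lambda>j. AUX (r,0) (Some v)" i] F2 ci by simp
  obtain K1 where K1: "\<forall>j\<in>C. \<forall>k\<ge>K1. (j, AUX (r,0) (Some v)) \<in> rcv (L k i)"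
    using deliv_all[of i "\<lambda>j. AUX (r,0) (Some v)"] ci all by blast
  obtain Q where Q: "Q \<subseteq> C" "card Q = n - t" using subC by blast
  have "\<forall>k\<ge>max K1 kb. mu (L k i) = 6 * r + 2 \<longrightarrow> enabled n t F coin (Main i) (s k)"
  proof (intro allI impI)
    fix k assume kk: "max K1 kb \<le> k" and mu: "mu (L k i) = 6 * r + 2"
    from mu_dec[OF mu] have rr: "rnd (L k i) = r" and pc: "pc (L k i) = WAux0" by (auto simp: pcidx_inv)
    have "kb \<le> k" using kk by simp
    then have b: "Some v \<in> bin (L k i) (r,0)" using bin_mono[OF \<open>kb \<le> k\<close> _ kb(1)] kb(2) by (simp add: tagm_def)
    have "K1 \<le> k" using kk by simp
    then have rc: "\<forall>j\<in>Q. (j, AUX (r,0) (Some v)) \<in> rcv (L k i)" using K1 Q(1) by blast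
    have "aux_ok n t (L k i) (rnd (L k i), 0) Q (\<lambda>_. Some v)"
      unfolding aux_ok_def using Q rc b rr by auto
    then show "enabled n t F coin (Main i) (s k)" using en_ex ms_A0[OF pc] ci by blast
  qed
  from progress[OF _ _ k1 this] ci obtain kk where "mu (L kk i) \<ge> Suc (6 * r + 2)" by blast
  then show "\<exists>k. mu (L k i) \<ge> 6 * r + 3" by (intro exI[of _ kk]) simp
qed

lemma R4: "reach (6 * r + 4)"
  unfolding reach_def
proof (intro allI impI)
  fix i assume ci: "i < n \<and> i \<notin> F"
  obtain k1 where k1: "mu (L k1 i) \<ge> 6 * r + 3" using reachD[OF R3] ci by blast
  obtain kb where kb: "Some v \<in> bin (L kb i) (r,0)" "mu (L kb i) \<ge> 6 * r + 1" using bin0 ci by blast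
  have all: "\<forall>j. j < n \<and> j \<notin> F \<longrightarrow> (\<exists>k. (j, i, AUXSET r {Some v}) \<in> net (s k))"
    using all_msgs[OF R3, of "6 * r + 2" "\<lambda>j. AUXSET r {Some v}" i] F3 ci by simp
  obtain K1 where K1: "\<forall>j\<in>C. \<forall>k\<ge>K1. (j, AUXSET r {Some v}) \<in> rcv (L k i)"
    using deliv_all[of i "\<lambda>j. AUXSET r {Some v}"] ci all by blast
  obtain Q where Q: "Q \<subseteq> C" "card Q = n - t" using subC by blast
  have "\<forall>k\<ge>max K1 kb. mu (L k i) = 6 * r + 3 \<longrightarrow> enabled n t F coin (Main i) (s k)"
  proof (intro allI impI)
    fix k assume kk: "max K1 kb \<le> k" and mu: "mu (L k i) = 6 * r + 3"
    from mu_dec[OF mu] have rr: "rnd (L k i) = r" and pc: "pc (L k i) = WAuxSet" by (auto simp: pcidx_inv)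
    have "kb \<le> k" using kk by simp
    then have b: "Some v \<in> bin (L k i) (r,0)" using bin_mono[OF \<open>kb \<le> k\<close> _ kb(1)] kb(2) by (simp add: tagm_def)
    have "K1 \<le> k" using kk by simp
    then have rc: "\<forall>j\<in>Q. (j, AUXSET r {Some v}) \<in> rcv (L k i)" using K1 Q(1) by blast
    have "auxset_ok n t (L k i) (rnd (L k i)) Q (\<lambda>_. {Some v})"
      unfolding auxset_ok_def using Q rc b rr by auto
    then show "enabled n t F coin (Main i) (s k)" using en_ex ms_AS[OF pc] ci by blast
  qed
  from progress[OF _ _ k1 this] ci obtain kk where "mu (L kk i) \<ge> Suc (6 * r + 3)" by blast
  then show "\<exists>k. mu (L k i) \<ge> 6 * r + 4" by (intro exI[of _ kk]) simp
qed

lemma bin1: assumes ci: "i < n" "i \<notin> F"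
  shows "\<exists>k. Some v \<in> bin (L k i) (r,1) \<and> mu (L k i) \<ge> 6 * r + 4"
proof -
  obtain k0 where k0: "mu (L k0 i) \<ge> 6 * r + 4" using reachD[OF R4] ci by blast
  have inv: "(r,1) \<in> invoked (L k0 i)" using F4[OF ci, of k0] k0 by simp
  have all: "\<forall>j. j < n \<and> j \<notin> F \<longrightarrow> (\<exists>k. (j, i, BVAL (r,1) (Some v)) \<in> net (s k))"
  proof (intro allI impI)
    fix j assume cj: "j < n \<and> j \<notin> F"
    obtain kj where "mu (L kj j) \<ge> 6 * r + 4" using reachD[OF R4] cj by blast
    then have "\<forall>i<n. (j, i, BVAL (r,1) (Some v)) \<in> net (s kj)" using F4[of j kj] cj by simp
    then show "\<exists>k. (j, i, BVAL (r,1) (Some v)) \<in> net (s k)" using ci by blast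
  qed
  have tg: "mu (L k0 i) \<ge> tagm (r,1)" using k0 by (simp add: tagm_def)
  obtain k where k: "k \<ge> k0" "Some v \<in> bin (L k i) (r,1)" using bin_event[OF ci tg inv all] by blast
  have "mu (L k0 i) \<le> mu (L k i)" using k(1) by (rule mu_mono)
  then show ?thesis using k k0 by (intro exI[of _ k]) simp
qed

lemma R5: "reach (6 * r + 5)"
  unfolding reach_def
proof (intro allI impI)
  fix i assume ci: "i < n \<and> i \<notin> F"
  obtain k1 where k1: "mu (L k1 i) \<ge> 6 * r + 4" using reachD[OF R4] ci by blast
  obtain kb where kb: "Some v \<in> bin (L kb i) (r,1)" "mu (L kb i) \<ge> 6 * r + 4" using bin1 ci by blast
  have "\<forall>k\<ge>kb. mu (L k i) = 6 * r + 4 \<longrightarrow> enabled n t F coin (Main i) (s k)"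
  proof (intro allI impI)
    fix k assume kk: "kb \<le> k" and mu: "mu (L k i) = 6 * r + 4"
    from mu_dec[OF mu] have rr: "rnd (L k i) = r" and pc: "pc (L k i) = WBin1" by (auto simp: pcidx_inv)
    have "Some v \<in> bin (L k i) (r,1)" using bin_mono[OF kk _ kb(1)] kb(2) by (simp add: tagm_def)
    then show "enabled n t F coin (Main i) (s k)" using en_ex ms_B1[OF pc] rr ci by simp
  qed
  from progress[OF _ _ k1 this] ci obtain kk where "mu (L kk i) \<ge> Suc (6 * r + 4)" by blast
  then show "\<exists>k. mu (L k i) \<ge> 6 * r + 5" by (intro exI[of _ kk]) simp
qed

lemma R6: "reach (6 * r + 6)"
  unfolding reach_def
proof (intro allI impI)
  fix i assume ci: "i < n \<and> i \<notin> F"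
  obtain k1 where k1: "mu (L k1 i) \<ge> 6 * r + 5" using reachD[OF R5] ci by blast
  obtain kb where kb: "Some v \<in> bin (L kb i) (r,1)" "mu (L kb i) \<ge> 6 * r + 4" using bin1 ci by blast
  have all: "\<forall>j. j < n \<and> j \<notin> F \<longrightarrow> (\<exists>k. (j, i, AUX (r,1) (Some v)) \<in> net (s k))"
    using all_msgs[OF R5, of "6 * r + 4" "\<lambda>j. AUX (r,1) (Some v)" i] F5 ci by simp
  obtain K1 where K1: "\<forall>j\<in>C. \<forall>k\<ge>K1. (j, AUX (r,1) (Some v)) \<in> rcv (L k i)"
    using deliv_all[of i "\<lambda>j. AUX (r,1) (Some v)"] ci all by blast
  obtain Q where Q: "Q \<subseteq> C" "card Q = n - t" using subC by blast
  have "\<forall>k\<ge>max K1 kb. mu (L k i) = 6 * r + 5 \<longrightarrow> enabled n t F coin (Main i) (s k)"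
  proof (intro allI impI)
    fix k assume kk: "max K1 kb \<le> k" and mu: "mu (L k i) = 6 * r + 5"
    from mu_dec[OF mu] have rr: "rnd (L k i) = r" and pc: "pc (L k i) = WAux1" by (auto simp: pcidx_inv)
    have "kb \<le> k" using kk by simp
    then have b: "Some v \<in> bin (L k i) (r,1)" using bin_mono[OF \<open>kb \<le> k\<close> _ kb(1)] kb(2) by (simp add: tagm_def)
    have "K1 \<le> k" using kk by simp
    then have rc: "\<forall>j\<in>Q. (j, AUX (r,1) (Some v)) \<in> rcv (L k i)" using K1 Q(1) by blast
    have "aux_ok n t (L k i) (rnd (L k i), 1) Q (\<lambda>_. Some v)"
      unfolding aux_ok_def using Q rc b rr by auto
    then show "enabled n t F coin (Main i) (s k)" using en_ex ms_A1[OF pc] ci by blast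
  qed
  from progress[OF _ _ k1 this] ci obtain kk where "mu (L kk i) \<ge> Suc (6 * r + 5)" by blast
  then show "\<exists>k. mu (L k i) \<ge> 6 * r + 6" by (intro exI[of _ kk]) simp
qed

lemma main_result:
  "(\<forall>i. i < n \<and> i \<notin> F \<longrightarrow>
            (\<exists>k. (r < rnd (loc (s k) i) \<or> (rnd (loc (s k) i) = r \<and> pc (loc (s k) i) = Start)) \<and>
                 (\<exists>w r'. dec (loc (s k) i) = Some (w, r') \<and> (r' < r \<or> (r' = r \<and> w = v)))))
       \<and> (\<forall>k i w r'. i < n \<and> i \<notin> F \<and> dec (loc (s k) i) = Some (w, r') \<and> r \<le> r' \<longrightarrow> w = v)"
proof (intro conjI allI impI)
  fix i assume ci: "i < n \<and> i \<notin> F"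
  obtain k1 where k1: "mu (L k1 i) \<ge> 6 * r + 6" using reachD[OF R6] ci by blast
  have "mu (L 0 i) \<le> 6 * r + 6" using mu0 by simp
  then obtain k where mu: "mu (L k i) = 6 * r + 6" using mu_ivt k1 by blast
  from mu_dec[OF mu] have rr: "rnd (L k i) = r" and pc: "pc (L k i) = Start" by (auto simp: pcidx_inv)
  have I: "InvP (s k) i" using Inv_k ci by (simp add: Inv_def)
  have "dec (L k i) \<noteq> None" using InvP_D(5)[OF I] pc rr by simp
  then obtain w q where d: "dec (L k i) = Some (w, q)" by auto
  have "q \<le> r \<and> (q \<ge> r \<longrightarrow> w = v)" using InvP_D(6)[OF I d] rr by simp
  then have "q < r \<or> (q = r \<and> w = v)" by auto
  then show "\<exists>k. (r < rnd (loc (s k) i) \<or> (rnd (loc (s k) i) = r \<and> pc (loc (s k) i) = Start)) \<and>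
                 (\<exists>w r'. dec (loc (s k) i) = Some (w, r') \<and> (r' < r \<or> (r' = r \<and> w = v)))"
    using rr pc d by blast
next
  fix k i w r' assume a: "i < n \<and> i \<notin> F \<and> dec (loc (s k) i) = Some (w, r') \<and> r \<le> r'"
  have I: "InvP (s k) i" using Inv_k a by (simp add: Inv_def)
  show "w = v" using InvP_D(6)[OF I] a by blast
qed

end

theorem lemma8:
  fixes n t d :: nat and F :: "nat set" and coin :: "nat \<Rightarrow> nat \<Rightarrow> bool"
    and inp :: "nat \<Rightarrow> bool" and s :: "nat \<Rightarrow> gstate" and lab :: "nat \<Rightarrow> action"
    and r :: nat and v :: bool
  assumes "n > 3 * t"
    and "F \<subseteq> {..<n}" and "card F \<le> t"
    and "weak_coin d n F coin"
    and "execution n t F coin inp s lab"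
    and "fair n t F coin s lab"
    and "r \<ge> 1"
    and start: "\<forall>i. i < n \<and> i \<notin> F \<longrightarrow>
           (\<exists>k. pc (loc (s k) i) = Start \<and> rnd (loc (s k) i) + 1 = r \<and> est (loc (s k) i) = Some v)"
  shows "(\<forall>i. i < n \<and> i \<notin> F \<longrightarrow>
            (\<exists>k. (r < rnd (loc (s k) i) \<or> (rnd (loc (s k) i) = r \<and> pc (loc (s k) i) = Start)) \<and>
                 (\<exists>w r'. dec (loc (s k) i) = Some (w, r') \<and> (r' < r \<or> (r' = r \<and> w = v)))))
       \<and> (\<forall>k i w r'. i < n \<and> i \<notin> F \<and> dec (loc (s k) i) = Some (w, r') \<and> r \<le> r' \<longrightarrow> w = v)"
proof -
  interpret ctx n t F coin inp s lab r v
    using assms(1,2,3,5,6,7) start by unfold_locales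
  show ?thesis by (rule main_result)
qed

end
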